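(* Let $X$ be a topological space in which every open set is a union of countably many clopen sets. Then $C_p(X)$ is an $\alpha_1$ space if, and only if, for every Borel function $\Psi:X\to\mathbb{N}^{\mathbb{N}}$ the image $\Psi[X]$ is bounded.
   Context: $C_p(X)$ is the set of continuous real-valued functions on $X$ with the topology of pointwise convergence (subspace of $\mathbb{R}^X$). In a topological space $Y$, a countable set $A$ of distinct points converges to $y$ if some (equivalently every) bijective enumeration of $A$ converges to $y$. $Y$ is an $\alpha_1$ space if for each $y\in Y$ and each sequence $A_1,A_2,\dots$ of countably infinite sets each converging to $y$, there are cofinite subsets $B_n\subseteq A_n$ such that $\bigcup_n B_n$ converges to $y$. A function $\Psi:X\to\mathbb{N}^{\mathbb{N}}$ is Borel if preimages of open sets are Borel in $X$. A set $Y\subseteq\mathbb{N}^{\mathbb{N}}$ is bounded if there is $g\in\mathbb{N}^{\mathbb{N}}$ such that for each $f\in Y$, $f(n)\le g(n)$ for all but finitely many $n$. *)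

theory Defs
  imports "HOL-Analysis.Analysis"
begin

definition Cp :: "'a topology \<Rightarrow> ('a \<Rightarrow> real) topology" where
  "Cp X = subtopology (product_topology (\<lambda>_. euclideanreal) (topspace X))
                      {f. continuous_map X euclideanreal f}"

text \<open>A countable set A of distinct points converges to y: some bijective enumeration of A
  converges to y.\<close>
definition set_converges :: "'b topology \<Rightarrow> 'b set \<Rightarrow> 'b \<Rightarrow> bool" where
  "set_converges Y A y \<longleftrightarrow> (\<exists>e::nat \<Rightarrow> 'b. bij_betw e UNIV A \<and> limitin Y e y sequentially)"

definition alpha1_space :: "'b topology \<Rightarrow> bool" where
  "alpha1_space Y \<longleftrightarrow>
    (\<forall>y\<in>topspace Y. \<forall>A::nat \<Rightarrow> 'b set.
       (\<forall>n. A n \<subseteq> topspace Y \<and> countable (A n) \<and> infinite (A n) \<and> set_converges Y (A n) y)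
       \<longrightarrow> (\<exists>B::nat \<Rightarrow> 'b set. (\<forall>n. B n \<subseteq> A n \<and> finite (A n - B n))
                                \<and> set_converges Y (\<Union>n. B n) y))"

definition borel_sets_of :: "'a topology \<Rightarrow> 'a set set" where
  "borel_sets_of X = sigma_sets (topspace X) {U. openin X U}"

text \<open>Borel function into the Baire space (nat \<Rightarrow> nat with the product of discrete topologies).\<close>
definition borel_fun :: "'a topology \<Rightarrow> ('a \<Rightarrow> (nat \<Rightarrow> nat)) \<Rightarrow> bool" where
  "borel_fun X \<Psi> \<longleftrightarrow> (\<forall>U::(nat \<Rightarrow> nat) set. open U \<longrightarrow> {x \<in> topspace X. \<Psi> x \<in> U} \<in> borel_sets_of X)"

definition baire_bounded :: "(nat \<Rightarrow> nat) set \<Rightarrow> bool" where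
  "baire_bounded Y \<longleftrightarrow> (\<exists>g::nat \<Rightarrow> nat. \<forall>f\<in>Y. \<forall>\<^sub>F n in sequentially. f n \<le> g n)"

end

theory Submission
  imports Defs
begin


definition lscf :: "'a topology \<Rightarrow> ('a \<Rightarrow> nat) \<Rightarrow> bool" where
  "lscf X f \<longleftrightarrow> (\<forall>m. openin X {x \<in> topspace X. m < f x})"

definition clopen :: "'a topology \<Rightarrow> 'a set \<Rightarrow> bool" where
  "clopen X C \<longleftrightarrow> closedin X C \<and> openin X C"

definition simple :: "'a topology \<Rightarrow> 'a set \<Rightarrow> bool" where
  "simple X S \<longleftrightarrow> S \<subseteq> topspace X \<and> (\<exists>C l. (\<forall>k. clopen X (C k)) \<and> lscf X l \<and>
      (\<forall>x\<in>topspace X. \<forall>k. l x \<le> k \<longrightarrow> (x \<in> C k \<longleftrightarrow> x \<in> S)))"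

definition Qprop :: "'a topology \<Rightarrow> bool" where
  "Qprop X \<longleftrightarrow> (\<forall>\<psi>::nat \<Rightarrow> 'a \<Rightarrow> nat. (\<forall>n. lscf X (\<psi> n)) \<longrightarrow>
      (\<exists>g. \<forall>x\<in>topspace X. \<forall>\<^sub>F n in sequentially. \<psi> n x \<le> g n))"

lemma exit_fun:
  assumes op: "\<And>m. openin X (Op m)" and fin: "\<And>x. x \<in> topspace X \<Longrightarrow> finite {m. x \<in> Op m}"
  defines "r \<equiv> (\<lambda>x. LEAST r. \<forall>m\<ge>r. x \<notin> Op m)"
  shows "lscf X r" and "\<And>x m. x \<in> topspace X \<Longrightarrow> x \<in> Op m \<Longrightarrow> m < r x"
proof -
  have ex: "\<exists>r. \<forall>m\<ge>r. x \<notin> Op m" if "x \<in> topspace X" for x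
  proof -
    have "finite {m. x \<in> Op m}" using fin that by blast
    then obtain b where "\<forall>m\<in>{m. x \<in> Op m}. m < b"
      using finite_nat_set_iff_bounded by blast
    then show ?thesis by (metis mem_Collect_eq not_le)
  qed
  have key: "m < r x \<longleftrightarrow> (\<exists>j\<ge>m. x \<in> Op j)" if "x \<in> topspace X" for x m
  proof
    assume "m < r x"
    show "\<exists>j\<ge>m. x \<in> Op j"
    proof (rule ccontr)
      assume "\<not> ?thesis"
      then have "\<forall>i\<ge>m. x \<notin> Op i" by blast
      then have "r x \<le> m" unfolding r_def by (rule Least_le)
      with \<open>m < r x\<close> show False by (meson not_le)
    qed
  next
    assume "\<exists>j\<ge>m. x \<in> Op j"
    then obtain j where "j \<ge> m" "x \<in> Op j" by blast
    have "\<forall>i\<ge>r x. x \<notin> Op i" unfolding r_def using LeastI_ex[OF ex[OF that]] by blast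
    with \<open>x \<in> Op j\<close> have "j < r x" by (meson not_le)
    with \<open>j \<ge> m\<close> show "m < r x" using le_less_trans by blast
  qed
  show "lscf X r" unfolding lscf_def
  proof
    fix m
    have "{x \<in> topspace X. m < r x} = (\<Union>j\<in>{m..}. topspace X \<inter> Op j)"
      using key by blast
    moreover have "openin X (\<Union>j\<in>{m..}. topspace X \<inter> Op j)"
      using op by (auto intro!: openin_Union openin_Int)
    ultimately show "openin X {x \<in> topspace X. m < r x}" by metis
  qed
  show "\<And>x m. x \<in> topspace X \<Longrightarrow> x \<in> Op m \<Longrightarrow> m < r x"
    using key by (meson order_refl)
qed

lemma lscf_max: "lscf X f \<Longrightarrow> lscf X g \<Longrightarrow> lscf X (\<lambda>x. max (f x) (g x))"
proof -
  assume a: "lscf X f" "lscf X g"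
  show ?thesis unfolding lscf_def
  proof
    fix m
    have "{x \<in> topspace X. m < max (f x) (g x)} = {x \<in> topspace X. m < f x} \<union> {x \<in> topspace X. m < g x}"
      by auto
    moreover have "openin X ({x \<in> topspace X. m < f x} \<union> {x \<in> topspace X. m < g x})"
      using a unfolding lscf_def by (intro openin_Un) auto
    ultimately show "openin X {x \<in> topspace X. m < max (f x) (g x)}"
      by metis
  qed
qed

lemma lscf_const: "lscf X (\<lambda>x. c)"
  unfolding lscf_def
proof
  fix m show "openin X {x \<in> topspace X. m < c}" by (cases "m < c") auto
qed

lemma lscf_MAX: assumes "\<And>i. lscf X (l i)" shows "lscf X (\<lambda>x. MAX i\<in>{..(n::nat)}. l i x)"
  unfolding lscf_def
proof
  fix m
  have "{x \<in> topspace X. m < (MAX i\<in>{..n}. l i x)} = (\<Union>i\<in>{..n}. {x \<in> topspace X. m < l i x})"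
    by (auto simp: Max_gr_iff)
  then show "openin X {x \<in> topspace X. m < (MAX i\<in>{..n}. l i x)}"
    using assms unfolding lscf_def by (auto intro!: openin_Union)
qed

lemma simple_clopen: "clopen X C \<Longrightarrow> simple X C"
  unfolding simple_def
  apply (rule conjI)
   apply (simp add: clopen_def openin_subset)
  apply (rule exI[of _ "\<lambda>k. C"], rule exI[of _ "\<lambda>x. 0"])
  by (simp add: lscf_const)

lemma clopen_empty: "clopen X {}" by (simp add: clopen_def)

lemma simple_compl: assumes "simple X S" shows "simple X (topspace X - S)"
proof -
  obtain C l where C: "\<forall>k. clopen X (C k)" "lscf X l"
     "\<forall>x\<in>topspace X. \<forall>k. l x \<le> k \<longrightarrow> (x \<in> C k \<longleftrightarrow> x \<in> S)"
    using assms unfolding simple_def by blast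
  show ?thesis unfolding simple_def
    apply (rule conjI, simp)
    apply (rule exI[of _ "\<lambda>k. topspace X - C k"], rule exI[of _ l])
    using C by (auto simp: clopen_def)
qed

lemma simple_Un: assumes "simple X S" "simple X S'" shows "simple X (S \<union> S')"
proof -
  obtain C l where C: "\<forall>k. clopen X (C k)" "lscf X l"
     "\<forall>x\<in>topspace X. \<forall>k. l x \<le> k \<longrightarrow> (x \<in> C k \<longleftrightarrow> x \<in> S)"
    using assms unfolding simple_def by blast
  obtain C' l' where C': "\<forall>k. clopen X (C' k)" "lscf X l'"
     "\<forall>x\<in>topspace X. \<forall>k. l' x \<le> k \<longrightarrow> (x \<in> C' k \<longleftrightarrow> x \<in> S')"
    using assms unfolding simple_def by blast
  show ?thesis unfolding simple_def
    apply (rule conjI) using assms apply (simp add: simple_def)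
    apply (rule exI[of _ "\<lambda>k. C k \<union> C' k"], rule exI[of _ "\<lambda>x. max (l x) (l' x)"])
    using C C' by (auto simp: clopen_def lscf_max)
qed

lemma simple_Diff: "simple X S \<Longrightarrow> simple X S' \<Longrightarrow> simple X (S - S')"
proof -
  assume a: "simple X S" "simple X S'"
  have "S - S' = topspace X - ((topspace X - S) \<union> S')"
    using a unfolding simple_def by auto
  then show ?thesis using a by (simp add: simple_compl simple_Un)
qed

lemma simple_UN_fin: "(\<And>i. simple X (S i)) \<Longrightarrow> simple X (\<Union>i<(n::nat). S i)"
proof (induction n)
  case 0
  then show ?case using simple_clopen[OF clopen_empty] by simp
next
  case (Suc n)
  then show ?case by (simp add: lessThan_Suc simple_Un)
qed

lemma cover_lemma:
  fixes T :: "nat \<Rightarrow> 'a set"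
  assumes Q: "Qprop X" and s: "\<And>m. simple X (T m)"
    and pf: "\<And>x. x \<in> topspace X \<Longrightarrow> finite {m. x \<in> T m}"
  shows "\<exists>V. (\<forall>m. openin X (V m)) \<and> (\<forall>m. T m \<subseteq> V m) \<and> (\<forall>x\<in>topspace X. finite {m. x \<in> V m})"
proof -
  have "\<forall>m. \<exists>C l. (\<forall>k. clopen X (C k)) \<and> lscf X l \<and>
      (\<forall>x\<in>topspace X. \<forall>k. l x \<le> k \<longrightarrow> (x \<in> C k \<longleftrightarrow> x \<in> T m))"
    using s unfolding simple_def by blast
  from choice[OF this] obtain C where "\<forall>m. \<exists>l. (\<forall>k. clopen X (C m k)) \<and> lscf X l \<and>
      (\<forall>x\<in>topspace X. \<forall>k. l x \<le> k \<longrightarrow> (x \<in> C m k \<longleftrightarrow> x \<in> T m))"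
    by blast
  from choice[OF this] obtain l :: "nat \<Rightarrow> 'a \<Rightarrow> nat" where "\<forall>m. (\<forall>k. clopen X (C m k)) \<and> lscf X (l m) \<and>
      (\<forall>x\<in>topspace X. \<forall>k. l m x \<le> k \<longrightarrow> (x \<in> C m k \<longleftrightarrow> x \<in> T m))"
    by blast
  then have C: "\<And>m k. clopen X (C m k)" "\<And>m. lscf X (l m)"
     "\<And>m x k. x\<in>topspace X \<Longrightarrow> l m x \<le> k \<Longrightarrow> (x \<in> C m k \<longleftrightarrow> x \<in> T m)"
    by auto
  obtain g where g: "\<forall>x\<in>topspace X. \<forall>\<^sub>F n in sequentially. l n x \<le> g n"
    using Q[unfolded Qprop_def, rule_format, of l] C(2) by blast
  define V where "V m = C m (g m) \<union> {x \<in> topspace X. g m < l m x}" for m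
  have "openin X (V m)" for m
    unfolding V_def using C(1)[of m "g m"] C(2)[of m] unfolding clopen_def lscf_def
    by (intro openin_Un) auto
  moreover have "T m \<subseteq> V m" for m
  proof
    fix x assume xT: "x \<in> T m"
    then have x: "x \<in> topspace X" using s[of m] unfolding simple_def by blast
    show "x \<in> V m"
    proof (cases "l m x \<le> g m")
      case True
      then have "x \<in> C m (g m)" using C(3)[OF x True] xT by blast
      then show ?thesis unfolding V_def by blast
    next
      case False
      then show ?thesis unfolding V_def using x by auto
    qed
  qed
  moreover have "finite {m. x \<in> V m}" if x: "x \<in> topspace X" for x
  proof -
    obtain N where N: "\<forall>n\<ge>N. l n x \<le> g n" using g x unfolding eventually_sequentially by blast
    have "{m. x \<in> V m} \<subseteq> {m. x \<in> T m} \<union> {..<N}"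
    proof
      fix m assume m: "m \<in> {m. x \<in> V m}"
      show "m \<in> {m. x \<in> T m} \<union> {..<N}"
      proof (cases "m < N")
        case False
        then have le: "l m x \<le> g m" using N by auto
        then have "x \<in> C m (g m)" using m unfolding V_def by auto
        then have "x \<in> T m" using C(3)[OF x le] by blast
        then show ?thesis by blast
      qed simp
    qed
    then show ?thesis using pf[OF x] by (meson finite_Un finite_lessThan finite_subset)
  qed
  ultimately show ?thesis by (intro exI[of _ V]) blast
qed



lemma simple_choice:
  fixes S :: "'i \<Rightarrow> 'a set"
  assumes "\<And>m. simple X (S m)"
  shows "\<exists>C l. (\<forall>m k. clopen X (C m k)) \<and> (\<forall>m. lscf X (l m)) \<and>
     (\<forall>m x k. x \<in> topspace X \<longrightarrow> l m x \<le> k \<longrightarrow> (x \<in> C m k \<longleftrightarrow> x \<in> S m))"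
proof -
  have "\<forall>m. \<exists>C l. (\<forall>k. clopen X (C k)) \<and> lscf X l \<and>
      (\<forall>x\<in>topspace X. \<forall>k. l x \<le> k \<longrightarrow> (x \<in> C k \<longleftrightarrow> x \<in> S m))"
    using assms unfolding simple_def by blast
  from choice[OF this] obtain C where "\<forall>m. \<exists>l. (\<forall>k. clopen X (C m k)) \<and> lscf X l \<and>
      (\<forall>x\<in>topspace X. \<forall>k. l x \<le> k \<longrightarrow> (x \<in> C m k \<longleftrightarrow> x \<in> S m))"
    by blast
  from choice[OF this] obtain l where "\<forall>m. (\<forall>k. clopen X (C m k)) \<and> lscf X (l m) \<and>
      (\<forall>x\<in>topspace X. \<forall>k. l m x \<le> k \<longrightarrow> (x \<in> C m k \<longleftrightarrow> x \<in> S m))"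
    by blast
  then show ?thesis by blast
qed

lemma QpropD:
  assumes "Qprop X" "\<And>n. lscf X (\<psi> n)"
  shows "\<exists>g. \<forall>x\<in>topspace X. \<forall>\<^sub>F n in sequentially. \<psi> n x \<le> g n"
  using assms(1)[unfolded Qprop_def, rule_format, of \<psi>] assms(2) by blast

lemma simple_UN:
  fixes S :: "nat \<Rightarrow> 'a set"
  assumes Q: "Qprop X" and s: "\<And>n. simple X (S n)"
  shows "simple X (\<Union>n. S n)"
proof -
  obtain C and l :: "nat \<Rightarrow> 'a \<Rightarrow> nat" where C: "\<And>m k. clopen X (C m k)" "\<And>m. lscf X (l m)"
    "\<And>m x k. x \<in> topspace X \<Longrightarrow> l m x \<le> k \<Longrightarrow> (x \<in> C m k \<longleftrightarrow> x \<in> S m)"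
    using simple_choice[of X S] s by blast
  define \<theta> where "\<theta> = (\<lambda>n x. MAX i\<in>{..(n::nat)}. l i x)"
  have l\<theta>: "lscf X (\<theta> n)" for n unfolding \<theta>_def using lscf_MAX[OF C(2)] .
  have lle: "l i x \<le> \<theta> n x" if "i \<le> n" for i n x
    unfolding \<theta>_def using that by (intro Max_ge) auto
  obtain g where g: "\<forall>x\<in>topspace X. \<forall>\<^sub>F n in sequentially. \<theta> n x \<le> g n"
    using QpropD[of X \<theta>, OF Q l\<theta>] by blast
  define Op where "Op n = {x \<in> topspace X. g n < \<theta> n x}" for n
  have opO: "openin X (Op n)" for n using l\<theta>[of n] unfolding lscf_def Op_def by blast
  have finO: "finite {n. x \<in> Op n}" if x: "x \<in> topspace X" for x
  proof -
    obtain N where N: "\<forall>n\<ge>N. \<theta> n x \<le> g n" using g x unfolding eventually_sequentially by blast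
    have "{n. x \<in> Op n} \<subseteq> {..<N}"
    proof
      fix n assume "n \<in> {n. x \<in> Op n}"
      then have "g n < \<theta> n x" unfolding Op_def by blast
      then show "n \<in> {..<N}" using N by (meson lessThan_iff not_le)
    qed
    then show ?thesis using finite_subset by blast
  qed
  define N' where "N' = (\<lambda>x. LEAST r. \<forall>m\<ge>r. x \<notin> Op m)"
  have N'1: "lscf X N'" and N'2: "\<And>x m. x \<in> topspace X \<Longrightarrow> x \<in> Op m \<Longrightarrow> m < N' x"
    unfolding N'_def using exit_fun[of X Op, OF opO finO] by blast+
  define P where "P n = S n - (\<Union>i<n. S i)" for n
  have sP: "simple X (P n)" for n unfolding P_def using s by (intro simple_Diff simple_UN_fin)
  have Puniq: "n = n'" if "x \<in> P n" "x \<in> P n'" for x n n'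
  proof (rule ccontr)
    assume "n \<noteq> n'"
    then consider "n < n'" | "n' < n" by linarith
    then show False
    proof cases
      case 1 then show False using that unfolding P_def by blast
    next
      case 2 then show False using that unfolding P_def by blast
    qed
  qed
  have finP: "finite {n. x \<in> P n}" for x
  proof (cases "\<exists>n. x \<in> P n")
    case True
    then obtain n0 where "x \<in> P n0" by blast
    then have "{n. x \<in> P n} \<subseteq> {n0}" using Puniq by blast
    then show ?thesis using finite_subset by blast
  next
    case False then show ?thesis by simp
  qed
  obtain V where V: "\<And>m. openin X (V m)" "\<And>m. P m \<subseteq> V m" "\<And>x. x \<in> topspace X \<Longrightarrow> finite {m. x \<in> V m}"
    using cover_lemma[of X P, OF Q sP finP] by blast
  define \<rho> where "\<rho> = (\<lambda>x. LEAST r. \<forall>m\<ge>r. x \<notin> V m)"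
  have \<rho>1: "lscf X \<rho>" and \<rho>2: "\<And>x m. x \<in> topspace X \<Longrightarrow> x \<in> V m \<Longrightarrow> m < \<rho> x"
    unfolding \<rho>_def using exit_fun[of X V, OF V(1) V(3)] by blast+
  define D where "D k = (\<Union>n\<in>{..k}. C n (g k))" for k
  define \<mu> where "\<mu> = (\<lambda>x. max (N' x) (\<rho> x))"
  have cD: "clopen X (D k)" for k
  proof -
    have "closedin X (D k)" unfolding D_def using C(1) unfolding clopen_def by (intro closedin_Union) auto
    moreover have "openin X (D k)" unfolding D_def using C(1) unfolding clopen_def by (intro openin_Union) auto
    ultimately show ?thesis unfolding clopen_def by blast
  qed
  have l\<mu>: "lscf X \<mu>" unfolding \<mu>_def using lscf_max[OF N'1 \<rho>1] .
  have main: "x \<in> D k \<longleftrightarrow> x \<in> (\<Union>n. S n)" if x: "x \<in> topspace X" and k: "\<mu> x \<le> k" for x k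
  proof -
    have "x \<notin> Op k"
    proof
      assume "x \<in> Op k"
      then have "k < N' x" by (rule N'2[OF x])
      then show False using k max.cobounded1[of "N' x" "\<rho> x"] unfolding \<mu>_def by linarith
    qed
    then have "\<not> g k < \<theta> k x" using x unfolding Op_def by blast
    then have k1: "\<theta> k x \<le> g k" by (rule leI)
    have eqv: "x \<in> C n (g k) \<longleftrightarrow> x \<in> S n" if "n \<le> k" for n
    proof -
      have "l n x \<le> g k" using lle[OF that, of x] k1 by linarith
      then show ?thesis by (rule C(3)[OF x])
    qed
    show ?thesis
    proof
      assume "x \<in> D k"
      then obtain n where "n \<le> k" "x \<in> C n (g k)" unfolding D_def by blast
      then show "x \<in> (\<Union>n. S n)" using eqv by blast
    next
      assume "x \<in> (\<Union>n. S n)"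
      then have ex: "\<exists>n. x \<in> S n" by blast
      define n0 where "n0 = (LEAST n. x \<in> S n)"
      have "x \<in> S n0" unfolding n0_def using LeastI_ex[OF ex] .
      moreover have "x \<notin> S i" if "i < n0" for i
        using not_less_Least[OF that[unfolded n0_def]] .
      ultimately have "x \<in> P n0" unfolding P_def by blast
      then have "n0 < \<rho> x" using \<rho>2[OF x] V(2) by blast
      then have "n0 \<le> k" using k max.cobounded2[of "N' x" "\<rho> x"] unfolding \<mu>_def by linarith
      then have "x \<in> C n0 (g k)" using eqv \<open>x \<in> S n0\<close> by blast
      then show "x \<in> D k" unfolding D_def using \<open>n0 \<le> k\<close> by blast
    qed
  qed
  have sub: "(\<Union>n. S n) \<subseteq> topspace X" using s unfolding simple_def by blast
  show ?thesis unfolding simple_def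
    apply (rule conjI[OF sub])
    apply (rule exI[of _ D], rule exI[of _ \<mu>])
    using cD l\<mu> main by blast
qed


definition Hyp :: "'a topology \<Rightarrow> bool" where
  "Hyp X \<longleftrightarrow> (\<forall>U. openin X U \<longrightarrow>
             (\<exists>\<C>. countable \<C> \<and> (\<forall>C\<in>\<C>. closedin X C \<and> openin X C) \<and> \<Union>\<C> = U))"

lemma open_simple:
  assumes Q: "Qprop X" and H: "Hyp X" and U: "openin X U"
  shows "simple X U"
proof -
  obtain \<C> where c: "countable \<C>" "\<forall>C\<in>\<C>. closedin X C \<and> openin X C" "\<Union>\<C> = U"
    using H U unfolding Hyp_def by blast
  show ?thesis
  proof (cases "\<C> = {}")
    case True
    then have "U = {}" using c(3) by blast
    then show ?thesis using simple_clopen[OF clopen_empty] by simp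
  next
    case False
    define S where "S n = from_nat_into \<C> n" for n
    have "S n \<in> \<C>" for n unfolding S_def using from_nat_into[OF False] .
    then have sS: "simple X (S n)" for n using c(2) simple_clopen unfolding clopen_def by blast
    have "range S = \<C>" unfolding S_def using range_from_nat_into[OF False c(1)] .
    then have "U = (\<Union>n. S n)" using c(3) by blast
    then show ?thesis using simple_UN[of X S, OF Q sS] by simp
  qed
qed

lemma borel_simple:
  assumes Q: "Qprop X" and H: "Hyp X"
    and S: "S \<in> sigma_sets (topspace X) {U. openin X U}"
  shows "simple X S"
  using S
proof induction
  case (Basic a)
  then show ?case using open_simple[OF Q H] by blast
next
  case Empty
  then show ?case using simple_clopen[OF clopen_empty] .
next
  case (Compl a)
  then show ?case using simple_compl by blast
next
  case (Union a)
  then show ?case using simple_UN[of X a, OF Q] by blast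
qed

lemma open_coord_gt: "open {f :: nat \<Rightarrow> nat. m < f n}"
proof -
  have "open {f :: nat \<Rightarrow> nat. \<forall>i\<in>{n}. f (id i) \<in> {m<..}}"
    by (rule product_topology_basis') auto
  moreover have "{f :: nat \<Rightarrow> nat. \<forall>i\<in>{n}. f (id i) \<in> {m<..}} = {f. m < f n}" by auto
  ultimately show ?thesis by metis
qed

lemma borel_bounded:
  assumes Q: "Qprop X" and H: "Hyp X" and B: "borel_fun X \<Psi>"
  shows "baire_bounded (\<Psi> ` topspace X)"
proof -
  define T where "T n m = {x \<in> topspace X. m < \<Psi> x n}" for n m
  have sT: "simple X (T n m)" for n m
  proof -
    have "{x \<in> topspace X. \<Psi> x \<in> {f. m < f n}} \<in> borel_sets_of X"
      using B open_coord_gt unfolding borel_fun_def by blast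
    moreover have "{x \<in> topspace X. \<Psi> x \<in> {f. m < f n}} = T n m" unfolding T_def by blast
    ultimately show ?thesis using borel_simple[OF Q H] unfolding borel_sets_of_def by metis
  qed
  have finT: "finite {m. x \<in> T n m}" for n x
  proof -
    have "{m. x \<in> T n m} \<subseteq> {..<\<Psi> x n}" unfolding T_def by auto
    then show ?thesis using finite_subset by blast
  qed
  have "\<forall>n. \<exists>V. (\<forall>m. openin X (V m)) \<and> (\<forall>m. T n m \<subseteq> V m) \<and> (\<forall>x\<in>topspace X. finite {m. x \<in> V m})"
    using cover_lemma[of X "T n" for n, OF Q sT finT] by blast
  from choice[OF this] obtain V where V: "\<And>n m. openin X (V n m)" "\<And>n m. T n m \<subseteq> V n m"
    "\<And>n x. x \<in> topspace X \<Longrightarrow> finite {m. x \<in> V n m}"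
    by blast
  define \<psi> where "\<psi> n = (\<lambda>x. LEAST r. \<forall>m\<ge>r. x \<notin> V n m)" for n
  have \<psi>1: "lscf X (\<psi> n)" and \<psi>2: "\<And>x m. x \<in> topspace X \<Longrightarrow> x \<in> V n m \<Longrightarrow> m < \<psi> n x" for n
    unfolding \<psi>_def using exit_fun[of X "V n", OF V(1) V(3)] by blast+
  have le: "\<Psi> x n \<le> \<psi> n x" if x: "x \<in> topspace X" for x n
  proof (cases "\<Psi> x n = 0")
    case False
    then have "x \<in> T n (\<Psi> x n - 1)" unfolding T_def using x by simp
    then have "\<Psi> x n - 1 < \<psi> n x" using \<psi>2[OF x] V(2) by blast
    then show ?thesis by linarith
  qed simp
  obtain g where g: "\<forall>x\<in>topspace X. \<forall>\<^sub>F n in sequentially. \<psi> n x \<le> g n"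
    using QpropD[of X \<psi>, OF Q \<psi>1] by blast
  have "\<forall>f\<in>\<Psi> ` topspace X. \<forall>\<^sub>F n in sequentially. f n \<le> g n"
  proof
    fix f assume "f \<in> \<Psi> ` topspace X"
    then obtain x where x: "x \<in> topspace X" "f = \<Psi> x" by blast
    have "\<forall>\<^sub>F n in sequentially. \<psi> n x \<le> g n" using g x(1) by blast
    then show "\<forall>\<^sub>F n in sequentially. f n \<le> g n"
    proof (rule eventually_mono)
      fix n assume "\<psi> n x \<le> g n"
      then show "f n \<le> g n" using le[OF x(1), of n] x(2) by simp
    qed
  qed
  then show ?thesis unfolding baire_bounded_def by blast
qed



lemma cont_ind:
  assumes "clopen X W"
  shows "continuous_map X euclideanreal (\<lambda>x. if x \<in> W then 1 else 0)"
  unfolding continuous_map_def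
proof (intro conjI allI impI)
  show "(\<lambda>x. if x \<in> W then 1 else 0) \<in> topspace X \<rightarrow> topspace euclideanreal" by simp
  fix U :: "real set"
  have W: "W \<subseteq> topspace X" "openin X W" "openin X (topspace X - W)"
    using assms unfolding clopen_def by (auto simp: openin_subset)
  have eq: "{x \<in> topspace X. (if x \<in> W then 1 else 0) \<in> U} =
      (if (1::real) \<in> U then W else {}) \<union> (if (0::real) \<in> U then topspace X - W else {})"
    using W(1) by auto
  have "openin X ((if (1::real) \<in> U then W else {}) \<union> (if (0::real) \<in> U then topspace X - W else {}))"
    by (intro openin_Un) (simp_all add: W)
  then show "openin X {x \<in> topspace X. (if x \<in> W then 1 else 0) \<in> U}"
    using eq by metis
qed

lemma open_seq:
  assumes H: "Hyp X" and U: "openin X U"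
  shows "\<exists>Op. (\<forall>j::nat. clopen X (Op j)) \<and> (\<Union>j. Op j) = U"
proof -
  obtain \<C> where c: "countable \<C>" "\<forall>C\<in>\<C>. closedin X C \<and> openin X C" "\<Union>\<C> = U"
    using H U unfolding Hyp_def by blast
  define \<D> where "\<D> = insert {} \<C>"
  have ne: "\<D> \<noteq> {}" and cD: "countable \<D>" unfolding \<D>_def using c(1) by auto
  have "clopen X (from_nat_into \<D> j)" for j
  proof -
    have "from_nat_into \<D> j \<in> \<D>" using from_nat_into[OF ne] .
    then show ?thesis using c(2) unfolding \<D>_def clopen_def by auto
  qed
  moreover have "(\<Union>j. from_nat_into \<D> j) = U"
    using range_from_nat_into[OF ne cD] c(3) unfolding \<D>_def by blast
  ultimately show ?thesis by blast
qed

lemma disj_seq: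
  fixes Op :: "nat \<Rightarrow> 'a set"
  assumes "\<And>j. clopen X (Op j)"
  defines "Op' \<equiv> (\<lambda>j. Op j - (\<Union>i<j. Op i))"
  shows "\<And>j. clopen X (Op' j)" "(\<Union>j. Op' j) = (\<Union>j. Op j)"
    "\<And>x j j'. x \<in> Op' j \<Longrightarrow> x \<in> Op' j' \<Longrightarrow> j = j'"
proof -
  fix j
  have "closedin X (\<Union>i<j. Op i)" using assms(1) unfolding clopen_def by (intro closedin_Union) auto
  moreover have "openin X (\<Union>i<j. Op i)" using assms(1) unfolding clopen_def by (intro openin_Union) auto
  ultimately show "clopen X (Op' j)" using assms(1)[of j] unfolding clopen_def Op'_def
    by (intro conjI openin_diff closedin_diff) auto
next
  show "(\<Union>j. Op' j) = (\<Union>j. Op j)"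
  proof
    show "(\<Union>j. Op' j) \<subseteq> (\<Union>j. Op j)" unfolding Op'_def by blast
  next
    show "(\<Union>j. Op j) \<subseteq> (\<Union>j. Op' j)"
    proof
      fix x assume "x \<in> (\<Union>j. Op j)"
      then have ex: "\<exists>j. x \<in> Op j" by blast
      define j0 where "j0 = (LEAST j. x \<in> Op j)"
      have "x \<in> Op j0" unfolding j0_def using LeastI_ex[OF ex] .
      moreover have "x \<notin> Op i" if "i < j0" for i
        using not_less_Least[OF that[unfolded j0_def]] .
      ultimately have "x \<in> Op' j0" unfolding Op'_def by blast
      then show "x \<in> (\<Union>j. Op' j)" by blast
    qed
  qed
next
  fix x j j' assume a: "x \<in> Op' j" "x \<in> Op' j'"
  show "j = j'"
  proof (rule ccontr)
    assume "j \<noteq> j'"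
    then consider "j < j'" | "j' < j" by linarith
    then show False
    proof cases
      case 1 then show False using a unfolding Op'_def by blast
    next
      case 2 then show False using a unfolding Op'_def by blast
    qed
  qed
qed


lemma topspace_Cp: "topspace (Cp X) = {h \<in> Pi\<^sub>E (topspace X) (\<lambda>_. UNIV). continuous_map X euclideanreal h}"
  unfolding Cp_def by auto

lemma limitin_Cp:
  assumes "\<forall>\<^sub>F k in F. f k \<in> topspace (Cp X)" "y \<in> topspace (Cp X)"
    and "\<And>x. x \<in> topspace X \<Longrightarrow> ((\<lambda>k. f k x) \<longlongrightarrow> y x) F"
  shows "limitin (Cp X) f y F"
proof -
  have e1: "\<forall>\<^sub>F k in F. f k \<in> {h. continuous_map X euclideanreal h}"
    using assms(1) unfolding topspace_Cp by (rule eventually_mono) blast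
  have e2: "\<forall>\<^sub>F k in F. f k \<in> topspace (product_topology (\<lambda>_. euclideanreal) (topspace X))"
    using assms(1) unfolding topspace_Cp by (rule eventually_mono) simp
  have y: "y \<in> extensional (topspace X)" "y \<in> {h. continuous_map X euclideanreal h}"
    using assms(2) unfolding topspace_Cp by (auto simp: PiE_def)
  show ?thesis unfolding Cp_def limitin_subtopology limitin_componentwise
    using e1 e2 y assms(3) by simp
qed

lemma limitin_Cp_D:
  assumes "limitin (Cp X) f y F" "x \<in> topspace X"
  shows "((\<lambda>k. f k x) \<longlongrightarrow> y x) F"
  using assms unfolding Cp_def limitin_subtopology limitin_componentwise by simp

lemma alpha1_Q:
  assumes A: "alpha1_space (Cp X)" and H: "Hyp X"
  shows "Qprop X"
  unfolding Qprop_def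
proof (intro allI impI)
  fix \<psi> :: "nat \<Rightarrow> 'a \<Rightarrow> nat" assume lsc: "\<forall>n. lscf X (\<psi> n)"
  show "\<exists>g. \<forall>x\<in>topspace X. \<forall>\<^sub>F n in sequentially. \<psi> n x \<le> g n"
  proof (cases "topspace X = {}")
    case True then show ?thesis by auto
  next
    case False
    then obtain x0 where x0: "x0 \<in> topspace X" by blast
    have ex1: "\<exists>Op. (\<forall>j::nat. clopen X (Op j)) \<and> (\<Union>j. Op j) = {x\<in>topspace X. m < \<psi> n x}" for n m
    proof -
      have "openin X {x\<in>topspace X. m < \<psi> n x}" using lsc unfolding lscf_def by blast
      then show ?thesis by (rule open_seq[OF H])
    qed
    have "\<forall>n. \<exists>F. \<forall>m. (\<forall>j::nat. clopen X (F m j)) \<and> (\<Union>j. F m j) = {x\<in>topspace X. m < \<psi> n x}"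
    proof
      fix n show "\<exists>F. \<forall>m. (\<forall>j::nat. clopen X (F m j)) \<and> (\<Union>j. F m j) = {x\<in>topspace X. m < \<psi> n x}"
        by (rule choice) (use ex1 in blast)
    qed
    from choice[OF this] obtain O0 :: "nat \<Rightarrow> nat \<Rightarrow> nat \<Rightarrow> 'a set" where O0all:
      "\<forall>n m. (\<forall>j::nat. clopen X (O0 n m j)) \<and> (\<Union>j. O0 n m j) = {x\<in>topspace X. m < \<psi> n x}"
      by blast
    have O0c: "clopen X (O0 n m j)" for n m j using O0all by blast
    have O0u: "(\<Union>j. O0 n m j) = {x\<in>topspace X. m < \<psi> n x}" for n m using O0all by blast
    note O0 = O0c O0u
    define O1 where "O1 n m j = O0 n m j - (\<Union>i<j. O0 n m i)" for n m j
    have O1c: "clopen X (O1 n m j)" for n m j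
      unfolding O1_def using disj_seq(1)[of X "O0 n m" j] O0(1) by blast
    have O1u: "(\<Union>j. O1 n m j) = {x\<in>topspace X. m < \<psi> n x}" for n m
      unfolding O1_def using disj_seq(2)[of X "O0 n m"] O0 by simp
    have O1d: "j = j'" if "x \<in> O1 n m j" "x \<in> O1 n m j'" for n m j j' x
      using disj_seq(3)[of X "O0 n m" x j j'] O0(1) that unfolding O1_def by blast
    define W where "W n k = O1 n (fst (prod_decode k)) (snd (prod_decode k))" for n k
    have Wc: "clopen X (W n k)" for n k unfolding W_def by (rule O1c)
    have W1: "fst (prod_decode k) < \<psi> n x" if "x \<in> W n k" for n k x
      using that O1u[of n "fst (prod_decode k)"] unfolding W_def by blast
    have W2: "finite {k. x \<in> W n k}" for n x
    proof -
      have fj: "finite {j. x \<in> O1 n m j}" for m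
      proof (cases "\<exists>j. x \<in> O1 n m j")
        case True
        then obtain j0 where "x \<in> O1 n m j0" by blast
        then have "{j. x \<in> O1 n m j} \<subseteq> {j0}" using O1d by blast
        then show ?thesis using finite_subset by blast
      next
        case False then show ?thesis by simp
      qed
      have "{k. x \<in> W n k} \<subseteq> prod_encode ` (SIGMA m:{..<\<psi> n x}. {j. x \<in> O1 n m j})"
      proof
        fix k assume k: "k \<in> {k. x \<in> W n k}"
        obtain m j where mj: "prod_decode k = (m, j)" by (cases "prod_decode k") blast
        have "m < \<psi> n x" using W1[of x n k] k mj by simp
        moreover have "x \<in> O1 n m j" using k mj unfolding W_def by simp
        moreover have "k = prod_encode (m, j)" using prod_decode_inverse[of k] mj by simp
        ultimately show "k \<in> prod_encode ` (SIGMA m:{..<\<psi> n x}. {j. x \<in> O1 n m j})" by blast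
      qed
      moreover have "finite (prod_encode ` (SIGMA m:{..<\<psi> n x}. {j. x \<in> O1 n m j}))"
        using fj by (intro finite_imageI finite_SigmaI) auto
      ultimately show ?thesis using finite_subset by blast
    qed
    have W3: "\<exists>j. x \<in> W n (prod_encode (m, j))" if "x \<in> topspace X" "m < \<psi> n x" for x n m
    proof -
      have "x \<in> (\<Union>j. O1 n m j)" using O1u[of n m] that by blast
      then obtain j where "x \<in> O1 n m j" by blast
      then show ?thesis unfolding W_def by auto
    qed
    define c where "c n k = 1 / (real (prod_encode (n, k)) + 2)" for n k
    have c_pos: "0 < c n k" for n k unfolding c_def by simp
    have c_le: "c n k \<le> 1/2" for n k unfolding c_def by (simp add: field_simps)
    have c_inj: "n = n' \<and> k = k'" if "c n k = c n' k'" for n k n' k'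
    proof -
      have "real (prod_encode (n, k)) + 2 = real (prod_encode (n', k')) + 2"
        using that unfolding c_def by (simp add: field_simps)
      then have "prod_encode (n, k) = prod_encode (n', k')" by simp
      then show ?thesis by simp
    qed
    have c_lim: "(\<lambda>k. c n k) \<longlonglongrightarrow> 0" for n
    proof (rule Lim_null_comparison)
      show "\<forall>\<^sub>F k in sequentially. norm (c n k) \<le> inverse (real (Suc k))"
      proof (rule always_eventually, rule allI)
        fix k
        have "real k \<le> real (prod_encode (n, k))" using le_prod_encode_2[of k n] by simp
        then have "real (Suc k) \<le> real (prod_encode (n, k)) + 2" by simp
        then show "norm (c n k) \<le> inverse (real (Suc k))"
          unfolding c_def using c_pos[of n k] by (simp add: field_simps)
      qed
      show "(\<lambda>k. inverse (real (Suc k))) \<longlonglongrightarrow> 0" by (rule LIMSEQ_inverse_real_of_nat)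
    qed
    define f where "f n k = restrict (\<lambda>x. (if x \<in> W n k then 1 else 0) + c n k) (topspace X)" for n k
    define y0 where "y0 = restrict (\<lambda>x. 0::real) (topspace X)"
    have f_top: "f n k \<in> topspace (Cp X)" for n k
    proof -
      have "continuous_map X euclideanreal (\<lambda>x. (if x \<in> W n k then 1 else 0) + c n k)"
        by (intro continuous_map_add cont_ind[OF Wc]) simp
      then have "continuous_map X euclideanreal (f n k)"
        by (rule continuous_map_eq) (simp add: f_def)
      then show ?thesis unfolding topspace_Cp f_def by simp
    qed
    have y0_top: "y0 \<in> topspace (Cp X)"
    proof -
      have "continuous_map X euclideanreal y0"
        by (rule continuous_map_eq[of _ _ "\<lambda>x. 0"]) (simp_all add: y0_def)
      then show ?thesis unfolding topspace_Cp y0_def by simp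
    qed
    have f_inj: "n = n' \<and> k = k'" if "f n k = f n' k'" for n k n' k'
    proof -
      have "f n k x0 = f n' k' x0" using that by simp
      then have e: "(if x0 \<in> W n k then 1 else 0) + c n k = (if x0 \<in> W n' k' then 1 else 0) + c n' k'"
        unfolding f_def using x0 by simp
      have "c n k = c n' k'"
        using e c_pos[of n k] c_le[of n k] c_pos[of n' k'] c_le[of n' k']
        by (auto split: if_splits)
      then show ?thesis by (rule c_inj)
    qed
    have inj_f: "inj (f n)" for n using f_inj unfolding inj_def by blast
    have f_lim: "((\<lambda>k. f n k x) \<longlonglongrightarrow> 0)" if x: "x \<in> topspace X" for n x
    proof -
      obtain b where b: "\<forall>k\<in>{k. x \<in> W n k}. k < b"
        using W2[of x n] finite_nat_set_iff_bounded by blast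
      have "\<forall>\<^sub>F k in sequentially. c n k = f n k x"
        unfolding eventually_sequentially
      proof (intro exI allI impI)
        fix k assume "b \<le> k"
        then have "x \<notin> W n k" using b by (meson mem_Collect_eq not_le)
        then show "c n k = f n k x" unfolding f_def using x by simp
      qed
      then show ?thesis by (rule Lim_transform_eventually[OF c_lim[of n]])
    qed
    have conv: "set_converges (Cp X) (range (f n)) y0" for n
      unfolding set_converges_def
    proof (intro exI conjI)
      show "bij_betw (f n) UNIV (range (f n))" using inj_f[of n] by (rule inj_on_imp_bij_betw)
      show "limitin (Cp X) (f n) y0 sequentially"
      proof (rule limitin_Cp)
        show "\<forall>\<^sub>F k in sequentially. f n k \<in> topspace (Cp X)" by (rule always_eventually) (use f_top in blast)
        show "y0 \<in> topspace (Cp X)" by (rule y0_top)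
        fix x assume x: "x \<in> topspace X"
        have "y0 x = 0" unfolding y0_def using x by simp
        then show "(\<lambda>k. f n k x) \<longlonglongrightarrow> y0 x" using f_lim[OF x, of n] by simp
      qed
    qed
    have hyp: "\<forall>n. range (f n) \<subseteq> topspace (Cp X) \<and> countable (range (f n)) \<and> infinite (range (f n))
        \<and> set_converges (Cp X) (range (f n)) y0"
    proof
      fix n
      have 1: "range (f n) \<subseteq> topspace (Cp X)" using f_top by blast
      have 2: "countable (range (f n))" by (rule countable_image) simp
      have 3: "infinite (range (f n))" by (rule range_inj_infinite[OF inj_f])
      show "range (f n) \<subseteq> topspace (Cp X) \<and> countable (range (f n)) \<and> infinite (range (f n))
        \<and> set_converges (Cp X) (range (f n)) y0" using 1 2 3 conv[of n] by blast
    qed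
    have exB: "\<exists>B. (\<forall>n. B n \<subseteq> range (f n) \<and> finite (range (f n) - B n)) \<and>
        set_converges (Cp X) (\<Union>n. B n) y0"
      by (rule A[unfolded alpha1_space_def, rule_format, OF y0_top hyp[rule_format]])
    then obtain B where Ball: "\<forall>n. B n \<subseteq> range (f n) \<and> finite (range (f n) - B n)"
      and B3: "set_converges (Cp X) (\<Union>n. B n) y0" by blast
    have B1: "B n \<subseteq> range (f n)" for n using Ball by blast
    have B2: "finite (range (f n) - B n)" for n using Ball by blast
    note B = B1 B2 B3
    have "\<forall>n. \<exists>b. \<forall>k\<ge>b. f n k \<in> B n"
    proof
      fix n
      have "finite (f n -` (range (f n) - B n))" using finite_vimageI[OF B(2) inj_f] .
      then obtain b where b: "\<forall>k\<in>f n -` (range (f n) - B n). k < b"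
        using finite_nat_set_iff_bounded by blast
      show "\<exists>b. \<forall>k\<ge>b. f n k \<in> B n"
      proof (intro exI allI impI)
        fix k assume "b \<le> k"
        show "f n k \<in> B n"
        proof (rule ccontr)
          assume "f n k \<notin> B n"
          then have "k \<in> f n -` (range (f n) - B n)" by simp
          then have "k < b" using b by blast
          then show False using \<open>b \<le> k\<close> by simp
        qed
      qed
    qed
    from choice[OF this] obtain g where g: "\<And>n k. g n \<le> k \<Longrightarrow> f n k \<in> B n" by blast
    obtain e where e: "bij_betw e UNIV (\<Union>n. B n)" "limitin (Cp X) e y0 sequentially"
      using B(3) unfolding set_converges_def by blast
    have "\<forall>\<^sub>F n in sequentially. \<psi> n x \<le> g n" if x: "x \<in> topspace X" for x
    proof -
      have "(\<lambda>j. e j x) \<longlonglongrightarrow> y0 x" using limitin_Cp_D[OF e(2) x] .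
      then have "(\<lambda>j. e j x) \<longlonglongrightarrow> 0" unfolding y0_def using x by simp
      then have "\<forall>\<^sub>F j in sequentially. dist (e j x) 0 < 1/2"
        by (rule tendstoD) simp
      then obtain J where J0: "\<forall>j\<ge>J. dist (e j x) 0 < 1/2"
        unfolding eventually_sequentially by blast
      have J: "\<bar>e j x\<bar> < 1/2" if "J \<le> j" for j using J0 that by (simp add: dist_real_def)
      have FS: "h \<in> e ` {..<J}" if "h \<in> (\<Union>n. B n)" "1/2 \<le> h x" for h
      proof -
        have "range e = (\<Union>n. B n)" using e(1) by (simp add: bij_betw_def)
        then have "h \<in> range e" using that(1) by simp
        then obtain j where j: "h = e j" by blast
        have "j < J"
        proof (rule ccontr)
          assume "\<not> j < J"
          then have "\<bar>e j x\<bar> < 1/2" using J by simp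
          then show False using that(2) j by simp
        qed
        then show ?thesis using j by blast
      qed
      define P where "P = {p. g (fst p) \<le> snd p \<and> x \<in> W (fst p) (snd p)}"
      have "(\<lambda>p. f (fst p) (snd p)) ` P \<subseteq> e ` {..<J}"
      proof
        fix h assume "h \<in> (\<lambda>p. f (fst p) (snd p)) ` P"
        then obtain p where p: "p \<in> P" "h = f (fst p) (snd p)" by blast
        define n where "n = fst p"
        define k where "k = snd p"
        have nk: "h = f n k" "g n \<le> k" "x \<in> W n k" using p unfolding P_def n_def k_def by simp_all
        have "h \<in> (\<Union>n. B n)" using g[OF nk(2)] nk(1) by blast
        moreover have "1/2 \<le> h x" using nk(1,3) c_pos[of n k] x unfolding f_def by simp
        ultimately show "h \<in> e ` {..<J}" by (rule FS)
      qed
      then have "finite ((\<lambda>p. f (fst p) (snd p)) ` P)" using finite_subset by blast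
      moreover have "inj_on (\<lambda>p. f (fst p) (snd p)) P"
        unfolding inj_on_def using f_inj by (simp add: prod_eq_iff)
      ultimately have "finite P" by (rule finite_imageD)
      then have "finite (fst ` P)" by simp
      then obtain N where N: "\<forall>n\<in>fst ` P. n < N" using finite_nat_set_iff_bounded by blast
      show ?thesis unfolding eventually_sequentially
      proof (intro exI allI impI)
        fix n assume "N \<le> n"
        show "\<psi> n x \<le> g n"
        proof (rule ccontr)
          assume "\<not> \<psi> n x \<le> g n"
          then have "g n < \<psi> n x" by simp
          then obtain j where j: "x \<in> W n (prod_encode (g n, j))" using W3[OF x] by blast
          have "g n \<le> prod_encode (g n, j)" by (rule le_prod_encode_1)
          then have "(n, prod_encode (g n, j)) \<in> P" unfolding P_def using j by simp
          then have "n < N" using N by force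
          then show False using \<open>N \<le> n\<close> by simp
        qed
      qed
    qed
    then show ?thesis by blast
  qed
qed



lemma borel_fun_coord:
  fixes \<Psi> :: "'a \<Rightarrow> nat \<Rightarrow> nat"
  assumes coord: "\<And>n m. {x \<in> topspace X. \<Psi> x n = m} \<in> borel_sets_of X"
  shows "borel_fun X \<Psi>"
  unfolding borel_fun_def
proof (intro allI impI)
  fix U :: "(nat \<Rightarrow> nat) set" assume U: "open U"
  define M where "M = borel_sets_of X"
  have sa: "sigma_algebra (topspace X) M"
    unfolding M_def borel_sets_of_def by (rule sigma_algebra_sigma_sets) (auto dest: openin_subset)
  interpret sa: sigma_algebra "topspace X" M by (rule sa)
  have topM: "topspace X \<in> M"
  proof -
    have "topspace X - {} \<in> M" unfolding M_def borel_sets_of_def by (intro sigma_sets.Compl sigma_sets.Empty)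
    then show ?thesis by simp
  qed
  have cS: "{x \<in> topspace X. \<Psi> x n \<in> S} \<in> M" for n S
  proof -
    have "{x \<in> topspace X. \<Psi> x n \<in> S} = (\<Union>m\<in>S. {x \<in> topspace X. \<Psi> x n = m})" by blast
    moreover have "(\<Union>m\<in>S. {x \<in> topspace X. \<Psi> x n = m}) \<in> M"
    proof (rule sa.countable_UN)
      show "(\<lambda>m. {x \<in> topspace X. \<Psi> x n = m}) ` S \<subseteq> M" using coord unfolding M_def by blast
    qed
    ultimately show ?thesis by metis
  qed
  obtain K :: "(nat \<Rightarrow> nat) set set" where K: "topological_basis K" "countable K"
    "\<forall>k\<in>K. \<exists>Xs. k = Pi\<^sub>E UNIV Xs \<and> (\<forall>i. open (Xs i)) \<and> finite {i. Xs i \<noteq> UNIV}"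
    using product_topology_countable_basis by blast
  have "\<exists>B'. B' \<subseteq> K \<and> \<Union>B' = U"
    using conjunct2[OF K(1)[unfolded topological_basis_def], rule_format, OF U] .
  then obtain B' where B': "B' \<subseteq> K" "\<Union>B' = U" by (elim exE conjE)
  have kM: "{x \<in> topspace X. \<Psi> x \<in> k} \<in> M" if "k \<in> K" for k
  proof -
    have "\<exists>Xs. k = Pi\<^sub>E UNIV Xs \<and> (\<forall>i. open (Xs i)) \<and> finite {i. Xs i \<noteq> UNIV}"
      using K(3) that by (rule bspec)
    then obtain Xs where Xs: "k = Pi\<^sub>E UNIV Xs" "finite {i. Xs i \<noteq> UNIV}" by (elim exE conjE)
    define I where "I = {i. Xs i \<noteq> UNIV}"
    have eq1: "{x \<in> topspace X. \<Psi> x \<in> k} = topspace X - (\<Union>i\<in>I. topspace X - {x \<in> topspace X. \<Psi> x i \<in> Xs i})"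
      unfolding Xs(1) I_def by (auto simp: PiE_iff)
    have UM: "(\<Union>i\<in>I. topspace X - {x \<in> topspace X. \<Psi> x i \<in> Xs i}) \<in> M"
    proof (rule sa.finite_UN)
      show "finite I" using Xs(2) unfolding I_def .
      fix i assume "i \<in> I"
      show "topspace X - {x \<in> topspace X. \<Psi> x i \<in> Xs i} \<in> M" by (rule sa.Diff[OF topM cS])
    qed
    show ?thesis unfolding eq1 by (rule sa.Diff[OF topM UM])
  qed
  have eq2: "{x \<in> topspace X. \<Psi> x \<in> U} = (\<Union>k\<in>B'. {x \<in> topspace X. \<Psi> x \<in> k})" using B'(2) by blast
  have "(\<Union>k\<in>B'. {x \<in> topspace X. \<Psi> x \<in> k}) \<in> M"
  proof (rule sa.countable_UN')
    show "countable B'" by (rule countable_subset[OF B'(1) K(2)])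
    show "(\<lambda>k. {x \<in> topspace X. \<Psi> x \<in> k}) ` B' \<subseteq> M" using kM B'(1) by blast
  qed
  then show "{x \<in> topspace X. \<Psi> x \<in> U} \<in> borel_sets_of X" unfolding eq2 M_def .
qed


lemma bounded_alpha1:
  assumes Bd: "\<forall>\<Psi>. borel_fun X \<Psi> \<longrightarrow> baire_bounded (\<Psi> ` topspace X)"
  shows "alpha1_space (Cp X)"
  unfolding alpha1_space_def
proof (intro ballI allI impI)
  fix y and A :: "nat \<Rightarrow> ('a \<Rightarrow> real) set"
  assume y: "y \<in> topspace (Cp X)"
  assume hA: "\<forall>n. A n \<subseteq> topspace (Cp X) \<and> countable (A n) \<and> infinite (A n) \<and> set_converges (Cp X) (A n) y"
  have "\<forall>n. \<exists>e. bij_betw e UNIV (A n) \<and> limitin (Cp X) e y sequentially"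
    using hA unfolding set_converges_def by blast
  from choice[OF this] obtain e :: "nat \<Rightarrow> nat \<Rightarrow> 'a \<Rightarrow> real" where
    eall: "\<forall>n. bij_betw (e n) UNIV (A n) \<and> limitin (Cp X) (e n) y sequentially" by blast
  have ebij: "bij_betw (e n) UNIV (A n)" for n using eall by blast
  have elim: "limitin (Cp X) (e n) y sequentially" for n using eall by blast
  have erange: "range (e n) = A n" for n using ebij[of n] unfolding bij_betw_def by blast
  have einj: "inj (e n)" for n using ebij[of n] unfolding bij_betw_def by blast
  have econv: "(\<lambda>k. e n k x) \<longlonglongrightarrow> y x" if "x \<in> topspace X" for n x
    using limitin_Cp_D[OF elim that] .
  have Atop: "A n \<subseteq> topspace (Cp X)" for n using hA by blast
  have contA: "continuous_map X euclideanreal h" if "h \<in> topspace (Cp X)" for h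
    using that unfolding topspace_Cp by blast
  define \<epsilon> where "\<epsilon> n = inverse (real (Suc n))" for n
  have \<epsilon>pos: "0 < \<epsilon> n" for n unfolding \<epsilon>_def by simp
  have exm: "\<exists>m. \<forall>k\<ge>m. \<bar>e n k x - y x\<bar> < \<epsilon> n" if x: "x \<in> topspace X" for n x
  proof -
    have "\<forall>\<^sub>F k in sequentially. dist (e n k x) (y x) < \<epsilon> n" using tendstoD[OF econv[OF x] \<epsilon>pos] .
    then obtain m where m: "\<forall>k\<ge>m. dist (e n k x) (y x) < \<epsilon> n" unfolding eventually_sequentially by blast
    have "\<forall>k\<ge>m. \<bar>e n k x - y x\<bar> < \<epsilon> n"
    proof (intro allI impI)
      fix k assume "m \<le> k"
      then have "dist (e n k x) (y x) < \<epsilon> n" using m by blast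
      then show "\<bar>e n k x - y x\<bar> < \<epsilon> n" by (simp add: dist_real_def)
    qed
    then show ?thesis by blast
  qed
  define \<Psi> where "\<Psi> x n = (LEAST m. \<forall>k\<ge>m. \<bar>e n k x - y x\<bar> < \<epsilon> n)" for x n
  have \<Psi>prop: "\<bar>e n k x - y x\<bar> < \<epsilon> n" if "x \<in> topspace X" "\<Psi> x n \<le> k" for x n k
  proof -
    have "\<forall>k\<ge>\<Psi> x n. \<bar>e n k x - y x\<bar> < \<epsilon> n" unfolding \<Psi>_def by (rule LeastI_ex[OF exm[OF that(1)]])
    then show ?thesis using that(2) by blast
  qed
  have \<Psi>le: "\<Psi> x n \<le> m" if "\<forall>k\<ge>m. \<bar>e n k x - y x\<bar> < \<epsilon> n" for x n m
    unfolding \<Psi>_def using that by (rule Least_le)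
  have openk: "openin X {x \<in> topspace X. \<bar>e n k x - y x\<bar> < \<epsilon> n}" for n k
  proof -
    have "e n k \<in> A n" using erange[of n] by blast
    then have c1: "continuous_map X euclideanreal (e n k)" using Atop contA by blast
    have c2: "continuous_map X euclideanreal y" using contA[OF y] .
    have c: "continuous_map X euclideanreal (\<lambda>x. e n k x - y x)" by (rule continuous_map_diff[OF c1 c2])
    have eq: "{x \<in> topspace X. \<bar>e n k x - y x\<bar> < \<epsilon> n} = {x \<in> topspace X. e n k x - y x \<in> {- \<epsilon> n<..<\<epsilon> n}}"
      by (auto simp: abs_less_iff)
    show ?thesis unfolding eq by (rule openin_continuous_map_preimage[OF c]) simp
  qed
  define M where "M = borel_sets_of X"
  have sa: "sigma_algebra (topspace X) M"
    unfolding M_def borel_sets_of_def by (rule sigma_algebra_sigma_sets) (auto dest: openin_subset)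
  interpret sa: sigma_algebra "topspace X" M by (rule sa)
  have openM: "U \<in> M" if "openin X U" for U
    unfolding M_def borel_sets_of_def using that by (intro sigma_sets.Basic) simp
  have L: "{x \<in> topspace X. \<Psi> x n \<le> m} \<in> M" for n m
  proof -
    have eq: "{x \<in> topspace X. \<Psi> x n \<le> m} = (\<Inter>k\<in>{m..}. {x \<in> topspace X. \<bar>e n k x - y x\<bar> < \<epsilon> n})"
    proof
      show "{x \<in> topspace X. \<Psi> x n \<le> m} \<subseteq> (\<Inter>k\<in>{m..}. {x \<in> topspace X. \<bar>e n k x - y x\<bar> < \<epsilon> n})"
      proof
        fix x assume x: "x \<in> {x \<in> topspace X. \<Psi> x n \<le> m}"
        have "\<bar>e n k x - y x\<bar> < \<epsilon> n" if "m \<le> k" for k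
          using \<Psi>prop[of x n k] x that by simp
        then show "x \<in> (\<Inter>k\<in>{m..}. {x \<in> topspace X. \<bar>e n k x - y x\<bar> < \<epsilon> n})" using x by simp
      qed
    next
      show "(\<Inter>k\<in>{m..}. {x \<in> topspace X. \<bar>e n k x - y x\<bar> < \<epsilon> n}) \<subseteq> {x \<in> topspace X. \<Psi> x n \<le> m}"
      proof
        fix x assume x: "x \<in> (\<Inter>k\<in>{m..}. {x \<in> topspace X. \<bar>e n k x - y x\<bar> < \<epsilon> n})"
        then have xT: "x \<in> topspace X" by auto
        have "\<forall>k\<ge>m. \<bar>e n k x - y x\<bar> < \<epsilon> n" using x by simp
        then have "\<Psi> x n \<le> m" by (rule \<Psi>le)
        then show "x \<in> {x \<in> topspace X. \<Psi> x n \<le> m}" using xT by simp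
      qed
    qed
    have "(\<Inter>k\<in>{m..}. {x \<in> topspace X. \<bar>e n k x - y x\<bar> < \<epsilon> n}) \<in> M"
    proof (rule sa.countable_INT)
      show "(\<lambda>k. {x \<in> topspace X. \<bar>e n k x - y x\<bar> < \<epsilon> n}) ` {m..} \<subseteq> M" using openM openk by blast
      show "{m..} \<noteq> {}" by auto
    qed
    then show ?thesis unfolding eq .
  qed
  have coord: "{x \<in> topspace X. \<Psi> x n = m} \<in> borel_sets_of X" for n m
  proof (cases m)
    case 0
    have "{x \<in> topspace X. \<Psi> x n = m} = {x \<in> topspace X. \<Psi> x n \<le> 0}" using 0 by auto
    then show ?thesis using L[of n 0] unfolding M_def by simp
  next
    case (Suc m')
    have "{x \<in> topspace X. \<Psi> x n = m} = {x \<in> topspace X. \<Psi> x n \<le> m} - {x \<in> topspace X. \<Psi> x n \<le> m'}"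
      using Suc by auto
    moreover have "{x \<in> topspace X. \<Psi> x n \<le> m} - {x \<in> topspace X. \<Psi> x n \<le> m'} \<in> M"
      by (rule sa.Diff[OF L L])
    ultimately show ?thesis unfolding M_def by simp
  qed
  have "borel_fun X \<Psi>" by (rule borel_fun_coord[OF coord])
  then obtain g where g: "\<forall>f\<in>\<Psi> ` topspace X. \<forall>\<^sub>F n in sequentially. f n \<le> g n"
    using Bd unfolding baire_bounded_def by blast
  define B where "B n = e n ` {g n..}" for n
  have BA: "B n \<subseteq> A n" for n unfolding B_def using erange[of n] by blast
  have finAB: "finite (A n - B n)" for n
  proof -
    have "A n - B n \<subseteq> e n ` {..<g n}"
    proof
      fix a assume a: "a \<in> A n - B n"
      then obtain k where k: "a = e n k" using erange[of n] by blast
      have "\<not> g n \<le> k" using a k unfolding B_def by blast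
      then show "a \<in> e n ` {..<g n}" using k by simp
    qed
    then show ?thesis using finite_subset by blast
  qed
  have cntU: "countable (\<Union>n. B n)" unfolding B_def by auto
  have infU: "infinite (\<Union>n. B n)"
  proof
    assume "finite (\<Union>n. B n)"
    then have "finite (B 0)" by (rule finite_subset[rotated]) blast
    moreover have "inj_on (e 0) {g 0..}" using einj[of 0] by (rule inj_on_subset) simp
    ultimately have "finite {g 0..}" unfolding B_def by (rule finite_imageD)
    then show False using infinite_Ici by blast
  qed
  define en where "en = from_nat_into (\<Union>n. B n)"
  have enbij: "bij_betw en UNIV (\<Union>n. B n)" unfolding en_def by (rule bij_betw_from_nat_into[OF cntU infU])
  have eninj: "inj en" using enbij unfolding bij_betw_def by blast
  have enr: "en j \<in> (\<Union>n. B n)" for j using enbij unfolding bij_betw_def by blast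
  have Utop: "(\<Union>n. B n) \<subseteq> topspace (Cp X)" using BA Atop by blast
  have conv: "set_converges (Cp X) (\<Union>n. B n) y"
    unfolding set_converges_def
  proof (intro exI conjI)
    show "bij_betw en UNIV (\<Union>n. B n)" by (rule enbij)
    show "limitin (Cp X) en y sequentially"
    proof (rule limitin_Cp)
      show "\<forall>\<^sub>F j in sequentially. en j \<in> topspace (Cp X)"
        by (rule always_eventually) (use enr Utop in blast)
      show "y \<in> topspace (Cp X)" by (rule y)
      fix x assume x: "x \<in> topspace X"
      show "(\<lambda>j. en j x) \<longlonglongrightarrow> y x"
      proof (rule tendstoI)
        fix \<delta> :: real assume \<delta>: "0 < \<delta>"
        have "\<Psi> x \<in> \<Psi> ` topspace X" using x by blast
        then have "\<forall>\<^sub>F n in sequentially. \<Psi> x n \<le> g n" using g by blast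
        then obtain N1 where N1: "\<forall>n\<ge>N1. \<Psi> x n \<le> g n" unfolding eventually_sequentially by blast
        obtain N2 where N2: "inverse (real (Suc N2)) < \<delta>" using reals_Archimedean[OF \<delta>] by auto
        define N where "N = max N1 N2"
        define bad where "bad n = {k. \<not> \<bar>e n k x - y x\<bar> < \<delta>}" for n
        have finbad: "finite (bad n)" for n
        proof -
          have "\<forall>\<^sub>F k in sequentially. dist (e n k x) (y x) < \<delta>" using tendstoD[OF econv[OF x] \<delta>] .
          then obtain K where K: "\<forall>k\<ge>K. dist (e n k x) (y x) < \<delta>" unfolding eventually_sequentially by blast
          have "bad n \<subseteq> {..<K}"
          proof
            fix k assume k: "k \<in> bad n"
            show "k \<in> {..<K}"
            proof (rule ccontr)
              assume "k \<notin> {..<K}"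
              then have "dist (e n k x) (y x) < \<delta>" using K by simp
              then have "\<bar>e n k x - y x\<bar> < \<delta>" by (simp add: dist_real_def)
              then show False using k unfolding bad_def by simp
            qed
          qed
          then show ?thesis using finite_subset by blast
        qed
        define Bad where "Bad = {h \<in> (\<Union>n. B n). \<not> \<bar>h x - y x\<bar> < \<delta>}"
        have "Bad \<subseteq> (\<Union>n<N. e n ` bad n)"
        proof
          fix h assume h: "h \<in> Bad"
          then obtain n k where nk: "h = e n k" "g n \<le> k" unfolding Bad_def B_def by blast
          have hb: "\<not> \<bar>e n k x - y x\<bar> < \<delta>" using h nk(1) unfolding Bad_def by blast
          have "n < N"
          proof (rule ccontr)
            assume "\<not> n < N"
            then have "N1 \<le> n" "N2 \<le> n" unfolding N_def by auto
            then have "\<Psi> x n \<le> k" using N1 nk(2) by force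
            then have "\<bar>e n k x - y x\<bar> < \<epsilon> n" by (rule \<Psi>prop[OF x])
            moreover have "\<epsilon> n \<le> inverse (real (Suc N2))" unfolding \<epsilon>_def
              by (rule le_imp_inverse_le) (use \<open>N2 \<le> n\<close> in auto)
            ultimately show False using hb N2 by linarith
          qed
          moreover have "k \<in> bad n" using hb unfolding bad_def by simp
          ultimately show "h \<in> (\<Union>n<N. e n ` bad n)" using nk(1) by blast
        qed
        moreover have "finite (\<Union>n<N. e n ` bad n)" using finbad by simp
        ultimately have "finite Bad" using finite_subset by blast
        then have "finite (en -` Bad)" using eninj by (rule finite_vimageI)
        then obtain J where J: "\<forall>j\<in>en -` Bad. j < J" using finite_nat_set_iff_bounded by blast
        show "\<forall>\<^sub>F j in sequentially. dist (en j x) (y x) < \<delta>"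
          unfolding eventually_sequentially
        proof (intro exI allI impI)
          fix j assume "J \<le> j"
          then have "en j \<notin> Bad" using J by (meson not_le vimageI)
          then have "\<bar>en j x - y x\<bar> < \<delta>" using enr[of j] unfolding Bad_def by blast
          then show "dist (en j x) (y x) < \<delta>" by (simp add: dist_real_def)
        qed
      qed
    qed
  qed
  show "\<exists>B. (\<forall>n. B n \<subseteq> A n \<and> finite (A n - B n)) \<and> set_converges (Cp X) (\<Union>n. B n) y"
    using BA finAB conv by blast
qed


theorem mainTheorem4:
  fixes X :: "'a topology"
  assumes "\<forall>U. openin X U \<longrightarrow>
             (\<exists>\<C>. countable \<C> \<and> (\<forall>C\<in>\<C>. closedin X C \<and> openin X C) \<and> \<Union>\<C> = U)"
  shows "alpha1_space (Cp X) \<longleftrightarrow>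
           (\<forall>\<Psi>. borel_fun X \<Psi> \<longrightarrow> baire_bounded (\<Psi> ` topspace X))"
proof -
  have H: "Hyp X" using assms unfolding Hyp_def .
  show ?thesis
  proof
    assume "alpha1_space (Cp X)"
    then have Q: "Qprop X" using alpha1_Q H by blast
    show "\<forall>\<Psi>. borel_fun X \<Psi> \<longrightarrow> baire_bounded (\<Psi> ` topspace X)"
      using borel_bounded[OF Q H] by blast
  next
    assume "\<forall>\<Psi>. borel_fun X \<Psi> \<longrightarrow> baire_bounded (\<Psi> ` topspace X)"
    then show "alpha1_space (Cp X)" by (rule bounded_alpha1)
  qed
qed

end
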